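(* There exists a large set of H-designs LH$(5,4u,4,3)$ for every positive integer $u$.
   Context: An H-design H$(n,g,k,t)$ is a triple $(Q,G,B)$ where $Q$ is a set of $ng$ points, $G$ is a partition of $Q$ into $n$ groups of size $g$, and $B$ is a set of $k$-subsets of $Q$ (blocks) such that each block meets each group in at most one point and any $t$ points from $t$ distinct groups lie in exactly one block. A large set of H-designs LH$(n,g,k,t)$ is a partition of the set of all $k$-subsets of $Q$ meeting each group of $G$ in at most one point into pairwise disjoint block sets, each of which forms (with $Q$ and $G$) an H-design H$(n,g,k,t)$. *)

theory Defs
  imports Main "HOL-Library.Disjoint_Sets"
begin

definition transverse :: "'a set set \<Rightarrow> 'a set \<Rightarrow> bool" where
  "transverse G S \<longleftrightarrow> (\<forall>X\<in>G. card (S \<inter> X) \<le> 1)"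

definition group_partition :: "nat \<Rightarrow> nat \<Rightarrow> 'a set \<Rightarrow> 'a set set \<Rightarrow> bool" where
  "group_partition n g Q G \<longleftrightarrow>
     finite Q \<and> card Q = n * g \<and> partition_on Q G \<and> card G = n \<and> (\<forall>X\<in>G. card X = g)"

definition transverse_subsets :: "nat \<Rightarrow> 'a set \<Rightarrow> 'a set set \<Rightarrow> 'a set set" where
  "transverse_subsets k Q G = {S. S \<subseteq> Q \<and> card S = k \<and> transverse G S}"

definition H_design :: "nat \<Rightarrow> nat \<Rightarrow> nat \<Rightarrow> nat \<Rightarrow> 'a set \<Rightarrow> 'a set set \<Rightarrow> 'a set set \<Rightarrow> bool" where
  "H_design n g k t Q G B \<longleftrightarrow>
     group_partition n g Q G \<and>
     B \<subseteq> transverse_subsets k Q G \<and>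
     (\<forall>T \<in> transverse_subsets t Q G. \<exists>!b. b \<in> B \<and> T \<subseteq> b)"

definition large_set_H :: "nat \<Rightarrow> nat \<Rightarrow> nat \<Rightarrow> nat \<Rightarrow> 'a set \<Rightarrow> 'a set set \<Rightarrow> 'a set set set \<Rightarrow> bool" where
  "large_set_H n g k t Q G L \<longleftrightarrow>
     group_partition n g Q G \<and>
     partition_on (transverse_subsets k Q G) L \<and>
     (\<forall>B\<in>L. H_design n g k t Q G B)"

end

theory Submission
  imports Defs
begin

definition tabW :: "nat list list list" where
  "tabW = [[[0,0,0,0],[0,2,5,7],[0,3,1,2],[0,1,6,7],[0,3,6,5]],[[0,5,2,7],[0,0,0,0],[0,3,4,7],[0,6,3,5],[0,6,4,2]],[[0,2,1,3],[0,3,4,7],[0,0,0,0],[0,1,4,5],[0,2,7,5]],[[0,6,1,7],[0,3,5,6],[0,5,1,4],[0,0,0,0],[0,3,7,4]],[[0,5,6,3],[0,4,6,2],[0,5,2,7],[0,4,3,7],[0,0,0,0]]]"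
definition Wv :: "nat \<Rightarrow> nat \<Rightarrow> nat \<Rightarrow> nat" where "Wv j i x = tabW ! j ! i ! x"
definition Cv :: "nat \<Rightarrow> nat" where "Cv j = [4,7,1,6,0] ! j"
definition lamt :: "nat list list" where "lamt = [[0,5,4,6,7],[5,0,3,7,1],[4,3,0,2,5],[6,7,2,0,3],[7,1,5,3,0]]"
definition lam :: "nat \<Rightarrow> nat \<Rightarrow> nat" where "lam d e = lamt ! d ! e"
definition bt :: "nat \<Rightarrow> nat \<Rightarrow> nat" where "bt k v = v div 2 ^ k mod 2"
definition par :: "nat \<Rightarrow> nat \<Rightarrow> nat" where
  "par l v = bt 0 l * bt 0 v + bt 1 l * bt 1 v + bt 2 l * bt 2 v"
lemma Wv_vals: "Wv 0 0 0 = 0"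
  "Wv 0 0 1 = 0"
  "Wv 0 0 2 = 0"
  "Wv 0 0 3 = 0"
  "Wv 0 1 0 = 0"
  "Wv 0 1 1 = 2"
  "Wv 0 1 2 = 5"
  "Wv 0 1 3 = 7"
  "Wv 0 2 0 = 0"
  "Wv 0 2 1 = 3"
  "Wv 0 2 2 = 1"
  "Wv 0 2 3 = 2"
  "Wv 0 3 0 = 0"
  "Wv 0 3 1 = 1"
  "Wv 0 3 2 = 6"
  "Wv 0 3 3 = 7"
  "Wv 0 4 0 = 0"
  "Wv 0 4 1 = 3"
  "Wv 0 4 2 = 6"
  "Wv 0 4 3 = 5"
  "Wv 1 0 0 = 0"
  "Wv 1 0 1 = 5"
  "Wv 1 0 2 = 2"
  "Wv 1 0 3 = 7"
  "Wv 1 1 0 = 0"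
  "Wv 1 1 1 = 0"
  "Wv 1 1 2 = 0"
  "Wv 1 1 3 = 0"
  "Wv 1 2 0 = 0"
  "Wv 1 2 1 = 3"
  "Wv 1 2 2 = 4"
  "Wv 1 2 3 = 7"
  "Wv 1 3 0 = 0"
  "Wv 1 3 1 = 6"
  "Wv 1 3 2 = 3"
  "Wv 1 3 3 = 5"
  "Wv 1 4 0 = 0"
  "Wv 1 4 1 = 6"
  "Wv 1 4 2 = 4"
  "Wv 1 4 3 = 2"
  "Wv 2 0 0 = 0"
  "Wv 2 0 1 = 2"
  "Wv 2 0 2 = 1"
  "Wv 2 0 3 = 3"
  "Wv 2 1 0 = 0"
  "Wv 2 1 1 = 3"
  "Wv 2 1 2 = 4"
  "Wv 2 1 3 = 7"
  "Wv 2 2 0 = 0"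
  "Wv 2 2 1 = 0"
  "Wv 2 2 2 = 0"
  "Wv 2 2 3 = 0"
  "Wv 2 3 0 = 0"
  "Wv 2 3 1 = 1"
  "Wv 2 3 2 = 4"
  "Wv 2 3 3 = 5"
  "Wv 2 4 0 = 0"
  "Wv 2 4 1 = 2"
  "Wv 2 4 2 = 7"
  "Wv 2 4 3 = 5"
  "Wv 3 0 0 = 0"
  "Wv 3 0 1 = 6"
  "Wv 3 0 2 = 1"
  "Wv 3 0 3 = 7"
  "Wv 3 1 0 = 0"
  "Wv 3 1 1 = 3"
  "Wv 3 1 2 = 5"
  "Wv 3 1 3 = 6"
  "Wv 3 2 0 = 0"
  "Wv 3 2 1 = 5"
  "Wv 3 2 2 = 1"
  "Wv 3 2 3 = 4"
  "Wv 3 3 0 = 0"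
  "Wv 3 3 1 = 0"
  "Wv 3 3 2 = 0"
  "Wv 3 3 3 = 0"
  "Wv 3 4 0 = 0"
  "Wv 3 4 1 = 3"
  "Wv 3 4 2 = 7"
  "Wv 3 4 3 = 4"
  "Wv 4 0 0 = 0"
  "Wv 4 0 1 = 5"
  "Wv 4 0 2 = 6"
  "Wv 4 0 3 = 3"
  "Wv 4 1 0 = 0"
  "Wv 4 1 1 = 4"
  "Wv 4 1 2 = 6"
  "Wv 4 1 3 = 2"
  "Wv 4 2 0 = 0"
  "Wv 4 2 1 = 5"
  "Wv 4 2 2 = 2"
  "Wv 4 2 3 = 7"
  "Wv 4 3 0 = 0"
  "Wv 4 3 1 = 4"
  "Wv 4 3 2 = 3"
  "Wv 4 3 3 = 7"
  "Wv 4 4 0 = 0"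
  "Wv 4 4 1 = 0"
  "Wv 4 4 2 = 0"
  "Wv 4 4 3 = 0"
  
  "Wv 0 0 (Suc 0) = 0"
  "Wv 0 (Suc 0) 0 = 0"
  "Wv 0 (Suc 0) (Suc 0) = 2"
  "Wv 0 (Suc 0) 2 = 5"
  "Wv 0 (Suc 0) 3 = 7"
  "Wv 0 2 (Suc 0) = 3"
  "Wv 0 3 (Suc 0) = 1"
  "Wv 0 4 (Suc 0) = 3"
  "Wv (Suc 0) 0 0 = 0"
  "Wv (Suc 0) 0 (Suc 0) = 5"
  "Wv (Suc 0) 0 2 = 2"
  "Wv (Suc 0) 0 3 = 7"
  "Wv (Suc 0) (Suc 0) 0 = 0"
  "Wv (Suc 0) (Suc 0) (Suc 0) = 0"
  "Wv (Suc 0) (Suc 0) 2 = 0"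
  "Wv (Suc 0) (Suc 0) 3 = 0"
  "Wv (Suc 0) 2 0 = 0"
  "Wv (Suc 0) 2 (Suc 0) = 3"
  "Wv (Suc 0) 2 2 = 4"
  "Wv (Suc 0) 2 3 = 7"
  "Wv (Suc 0) 3 0 = 0"
  "Wv (Suc 0) 3 (Suc 0) = 6"
  "Wv (Suc 0) 3 2 = 3"
  "Wv (Suc 0) 3 3 = 5"
  "Wv (Suc 0) 4 0 = 0"
  "Wv (Suc 0) 4 (Suc 0) = 6"
  "Wv (Suc 0) 4 2 = 4"
  "Wv (Suc 0) 4 3 = 2"
  "Wv 2 0 (Suc 0) = 2"
  "Wv 2 (Suc 0) 0 = 0"
  "Wv 2 (Suc 0) (Suc 0) = 3"
  "Wv 2 (Suc 0) 2 = 4"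
  "Wv 2 (Suc 0) 3 = 7"
  "Wv 2 2 (Suc 0) = 0"
  "Wv 2 3 (Suc 0) = 1"
  "Wv 2 4 (Suc 0) = 2"
  "Wv 3 0 (Suc 0) = 6"
  "Wv 3 (Suc 0) 0 = 0"
  "Wv 3 (Suc 0) (Suc 0) = 3"
  "Wv 3 (Suc 0) 2 = 5"
  "Wv 3 (Suc 0) 3 = 6"
  "Wv 3 2 (Suc 0) = 5"
  "Wv 3 3 (Suc 0) = 0"
  "Wv 3 4 (Suc 0) = 3"
  "Wv 4 0 (Suc 0) = 5"
  "Wv 4 (Suc 0) 0 = 0"
  "Wv 4 (Suc 0) (Suc 0) = 4"
  "Wv 4 (Suc 0) 2 = 6"
  "Wv 4 (Suc 0) 3 = 2"
  "Wv 4 2 (Suc 0) = 5"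
  "Wv 4 3 (Suc 0) = 4"
  "Wv 4 4 (Suc 0) = 0"
  by (simp_all add: Wv_def tabW_def)
lemma Cv_vals: "Cv 0 = 4" "Cv 1 = 7" "Cv 2 = 1" "Cv 3 = 6" "Cv 4 = 0"
  
  "Cv (Suc 0) = 7"
  by (simp_all add: Cv_def)
lemma lam_vals: "lam 0 0 = 0"
  "lam 0 1 = 5"
  "lam 0 2 = 4"
  "lam 0 3 = 6"
  "lam 0 4 = 7"
  "lam 1 0 = 5"
  "lam 1 1 = 0"
  "lam 1 2 = 3"
  "lam 1 3 = 7"
  "lam 1 4 = 1"
  "lam 2 0 = 4"
  "lam 2 1 = 3"
  "lam 2 2 = 0"
  "lam 2 3 = 2"
  "lam 2 4 = 5"
  "lam 3 0 = 6"
  "lam 3 1 = 7"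
  "lam 3 2 = 2"
  "lam 3 3 = 0"
  "lam 3 4 = 3"
  "lam 4 0 = 7"
  "lam 4 1 = 1"
  "lam 4 2 = 5"
  "lam 4 3 = 3"
  "lam 4 4 = 0"
  
  "lam 0 (Suc 0) = 5"
  "lam (Suc 0) 0 = 5"
  "lam (Suc 0) (Suc 0) = 0"
  "lam (Suc 0) 2 = 3"
  "lam (Suc 0) 3 = 7"
  "lam (Suc 0) 4 = 1"
  "lam 2 (Suc 0) = 3"
  "lam 3 (Suc 0) = 7"
  "lam 4 (Suc 0) = 1"
  by (simp_all add: lam_def lamt_def)


lemma all5: "(\<forall>d<(5::nat). P d) \<longleftrightarrow> P 0 \<and> P 1 \<and> P 2 \<and> P 3 \<and> P 4"
  by (auto simp: less_Suc_eq numeral_eq_Suc)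
lemma all4: "(\<forall>d<(4::nat). P d) \<longleftrightarrow> P 0 \<and> P 1 \<and> P 2 \<and> P 3"
  by (auto simp: less_Suc_eq numeral_eq_Suc)

lemma lam_sym0: "\<forall>d<5. \<forall>e<5. lam d e = lam e d"
  unfolding all5 by (simp add: lam_vals)
lemma lam_sym: "d < 5 \<Longrightarrow> e < 5 \<Longrightarrow> lam d e = lam e d"
  using lam_sym0 by blast

lemma Wv_lt0: "\<forall>j<5. \<forall>i<5. \<forall>x<4. Wv j i x < 8"
  unfolding all5 all4 by (simp add: Wv_vals)

lemma F1_0: "\<forall>j<5. \<forall>q<5. \<forall>y<4. \<forall>y'<4. q \<noteq> j \<longrightarrow> Wv j q y = Wv j q y' \<longrightarrow> y = y'"
  unfolding all5 all4 by (simp add: Wv_vals)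

lemma F4_0: "\<forall>d<5. \<forall>e<5. d \<noteq> e \<longrightarrow> odd (par (lam d e) (Cv e) + par (lam d e) (Cv d))"
  unfolding all5 by (simp add: lam_vals Cv_vals par_def bt_def)

lemma F3_0: "\<forall>d<5. \<forall>e<5. \<forall>y<4. d \<noteq> e \<longrightarrow> even (par (lam d e) (Wv e d y))"
  unfolding all5 all4 by (simp add: lam_vals Wv_vals par_def bt_def)

lemma F2_0: "\<forall>d<5. \<forall>e<5. \<forall>i<5. \<forall>x<4. d \<noteq> e \<longrightarrow> i \<noteq> d \<longrightarrow> i \<noteq> e \<longrightarrow>
   even (par (lam d e) (Wv e i x) + par (lam d e) (Wv d i x))"
  unfolding all5 all4 by (simp add: lam_vals Wv_vals par_def bt_def)


definition grp :: "nat \<Rightarrow> nat \<Rightarrow> nat" where "grp u p = p div (4*u)"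
definition xx :: "nat \<Rightarrow> nat \<Rightarrow> nat" where "xx u p = p mod (4*u) mod 4"
definition zz :: "nat \<Rightarrow> nat \<Rightarrow> nat" where "zz u p = p mod (4*u) div 4"
definition QQ :: "nat \<Rightarrow> nat set" where "QQ u = {..<5*(4*u)}"
definition grpset :: "nat \<Rightarrow> nat \<Rightarrow> nat set" where "grpset u i = {p. p < 5*(4*u) \<and> p div (4*u) = i}"
definition GG :: "nat \<Rightarrow> nat set set" where "GG u = grpset u ` {..<5}"

lemma grp_lt: "p < 5*(4*u) \<Longrightarrow> grp u p < 5"
  unfolding grp_def by (simp add: less_mult_imp_div_less)

lemma trans_iff:
  assumes "S \<subseteq> QQ u"
  shows "transverse (GG u) S \<longleftrightarrow> inj_on (grp u) S"
proof -
  have fin: "finite S" using assms finite_subset unfolding QQ_def by blast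
  have eq: "\<And>i. S \<inter> grpset u i = {p\<in>S. grp u p = i}"
    using assms by (auto simp: QQ_def grp_def grpset_def)
  have "transverse (GG u) S \<longleftrightarrow> (\<forall>i<5. card {p\<in>S. grp u p = i} \<le> 1)"
    unfolding transverse_def GG_def using eq by auto
  also have "\<dots> \<longleftrightarrow> inj_on (grp u) S"
  proof
    assume H: "\<forall>i<5. card {p\<in>S. grp u p = i} \<le> 1"
    show "inj_on (grp u) S"
    proof (rule inj_onI)
      fix p p' assume pp: "p \<in> S" "p' \<in> S" "grp u p = grp u p'"
      have "grp u p < 5" using pp assms grp_lt unfolding QQ_def by blast
      then have "card {q\<in>S. grp u q = grp u p} \<le> Suc 0" using H by simp
      moreover have "finite {q\<in>S. grp u q = grp u p}" using fin by simp
      ultimately show "p = p'" using pp by (subst (asm) card_le_Suc0_iff_eq) auto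
    qed
  next
    assume "inj_on (grp u) S"
    then show "\<forall>i<5. card {p\<in>S. grp u p = i} \<le> 1"
      using fin by (auto simp: card_le_Suc0_iff_eq inj_on_def)
  qed
  finally show ?thesis .
qed

lemma div_iff: "(0::nat) < g \<Longrightarrow> p div g = i \<longleftrightarrow> i*g \<le> p \<and> p < i*g + g"
proof
  assume g: "0 < g" and "p div g = i"
  then show "i*g \<le> p \<and> p < i*g + g"
    by (metis add.commute div_times_less_eq_dividend mod_div_mult_eq mod_less_divisor nat_add_left_cancel_less)
next
  assume "0 < g" "i*g \<le> p \<and> p < i*g + g"
  then show "p div g = i" by (intro div_nat_eqI) (auto simp: mult.commute)
qed

lemma grpset_eq: "u > 0 \<Longrightarrow> i < 5 \<Longrightarrow> grpset u i = {i*(4*u)..<i*(4*u)+4*u}"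
proof -
  assume u: "u > 0" and i: "i < 5"
  have "i*(4*u) \<le> 4*(4*u)" using i by (intro mult_le_mono1) simp
  then have b: "i*(4*u) + 4*u \<le> 20*u" by linarith
  show ?thesis unfolding grpset_def using div_iff[of "4*u"] u b by (auto intro: less_le_trans)
qed

lemma card_grpset: "u > 0 \<Longrightarrow> i < 5 \<Longrightarrow> card (grpset u i) = 4*u"
  by (simp add: grpset_eq)

lemma mem_grpset: "u > 0 \<Longrightarrow> i < 5 \<Longrightarrow> i*(4*u) \<in> grpset u i"
  by (simp add: grpset_eq)

lemma gp: "u > 0 \<Longrightarrow> group_partition 5 (4*u) (QQ u) (GG u)"
proof -
  assume u: "u > 0"
  have inj: "inj_on (grpset u) {..<5}"
  proof (rule inj_onI)
    fix i i' assume "i \<in> {..<5}" "i' \<in> {..<5}" "grpset u i = grpset u i'"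
    then have "i*(4*u) \<in> grpset u i'" using mem_grpset[OF u] by auto
    then show "i = i'" using u unfolding grpset_def by auto
  qed
  have U: "\<Union>(GG u) = QQ u"
    unfolding GG_def QQ_def grpset_def using grp_lt[unfolded grp_def] by auto
  have D: "disjoint (GG u)"
    unfolding GG_def disjoint_def pairwise_def disjnt_def grpset_def by auto
  have E: "{} \<notin> GG u"
    unfolding GG_def using mem_grpset[OF u] by auto
  show ?thesis unfolding group_partition_def partition_on_def
    using U D E inj u card_grpset by (auto simp: QQ_def GG_def card_image)
qed


definition tri :: "nat \<Rightarrow> nat set \<Rightarrow> bool" where
  "tri u T \<longleftrightarrow> T \<subseteq> QQ u \<and> card T = 3 \<and> inj_on (grp u) T"
definition Mset :: "nat \<Rightarrow> nat set \<Rightarrow> nat set" where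
  "Mset u T = {..<5} - grp u ` T"
definition cand :: "nat \<Rightarrow> nat set \<Rightarrow> nat set" where
  "cand u T = {p. p < 5*(4*u) \<and> grp u p \<notin> grp u ` T}"

lemma tri_finite: "tri u T \<Longrightarrow> finite T"
  unfolding tri_def QQ_def using finite_subset by blast

lemma tri_img: "tri u T \<Longrightarrow> grp u ` T \<subseteq> {..<5}"
  unfolding tri_def QQ_def using grp_lt by auto

lemma tri_card_img: "tri u T \<Longrightarrow> card (grp u ` T) = 3"
  unfolding tri_def by (simp add: card_image)

lemma card_Mset: "tri u T \<Longrightarrow> card (Mset u T) = 2"
proof -
  assume T: "tri u T"
  have "card ({..<5::nat} - grp u ` T) = card {..<5::nat} - card (grp u ` T)"
    using tri_img[OF T] by (intro card_Diff_subset) (auto intro: finite_subset)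
  then show ?thesis unfolding Mset_def using tri_card_img[OF T] by simp
qed

lemma tri_sum:
  assumes "tri u T"
  obtains m1 m2 where "Mset u T = {m1,m2}" "m1 \<noteq> m2" "(\<Sum>t\<in>T. grp u t) + m1 + m2 = 10"
proof -
  obtain m1 m2 where M: "Mset u T = {m1,m2}" "m1 \<noteq> m2"
    using card_Mset[OF assms] by (auto simp: card_2_iff)
  have "(\<Sum>t\<in>T. grp u t) = (\<Sum>i\<in>grp u ` T. i)"
    using assms unfolding tri_def by (simp add: sum.reindex)
  moreover have "(\<Sum>i<5. i) = (\<Sum>i\<in>grp u ` T. i) + (\<Sum>i\<in>Mset u T. i)"
  proof -
    have "{..<5::nat} = grp u ` T \<union> Mset u T" using tri_img[OF assms] unfolding Mset_def by auto
    moreover have "grp u ` T \<inter> Mset u T = {}" unfolding Mset_def by auto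
    ultimately show ?thesis by (metis finite_Un finite_lessThan sum.union_disjoint)
  qed
  moreover have "(\<Sum>i<5. i) = (10::nat)" by (simp add: numeral_eq_Suc)
  moreover have "(\<Sum>i\<in>Mset u T. i) = m1 + m2" using M by simp
  ultimately show ?thesis using that M by simp
qed

lemma cand_iff: "p \<in> cand u T \<longleftrightarrow> p < 5*(4*u) \<and> grp u p \<in> Mset u T"
  unfolding cand_def Mset_def using grp_lt by auto

lemma card_cand:
  assumes u: "u > 0" and T: "tri u T"
  shows "card (cand u T) = 8*u"
proof -
  let ?f = "\<lambda>(i,r). i*(4*u) + r"
  have inj: "inj_on ?f (Mset u T \<times> {..<4*u})"
  proof (rule inj_onI)
    fix x y assume x: "x \<in> Mset u T \<times> {..<4*u}" and y: "y \<in> Mset u T \<times> {..<4*u}" and fxy: "?f x = ?f y"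
    obtain i r where xi: "x = (i,r)" by (cases x)
    obtain i' r' where yi: "y = (i',r')" by (cases y)
    have r: "r < 4*u" and r': "r' < 4*u" using x y xi yi by auto
    have eq: "i*(4*u) + r = i'*(4*u) + r'" using fxy xi yi by simp
    have a: "(i*(4*u) + r) div (4*u) = i" "(i*(4*u) + r) mod (4*u) = r" using r by auto
    have b: "(i'*(4*u) + r') div (4*u) = i'" "(i'*(4*u) + r') mod (4*u) = r'" using r' by auto
    show "x = y" using eq a b xi yi by metis
  qed
  have img: "cand u T = ?f ` (Mset u T \<times> {..<4*u})"
  proof
    show "cand u T \<subseteq> ?f ` (Mset u T \<times> {..<4*u})"
    proof
      fix p assume p: "p \<in> cand u T"
      then have "(p div (4*u), p mod (4*u)) \<in> Mset u T \<times> {..<4*u}"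
        using u by (auto simp: cand_iff grp_def)
      moreover have "p = ?f (p div (4*u), p mod (4*u))" by (simp add: div_mult_mod_eq)
      ultimately show "p \<in> ?f ` (Mset u T \<times> {..<4*u})" by blast
    qed
  next
    show "?f ` (Mset u T \<times> {..<4*u}) \<subseteq> cand u T"
    proof clarify
      fix i r assume i: "i \<in> Mset u T" and r: "r < 4*u"
      have "i < 5" using i unfolding Mset_def by auto
      have "i*(4*u) + r \<in> grpset u i" using grpset_eq[OF u \<open>i<5\<close>] r by auto
      then have "i*(4*u) + r < 5*(4*u)" "grp u (i*(4*u) + r) = i"
        unfolding grpset_def grp_def by auto
      then show "i*(4*u) + r \<in> cand u T" using i by (simp add: cand_iff)
    qed
  qed
  show ?thesis using card_image[OF inj] img card_Mset[OF T] by (simp add: card_cartesian_product)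
qed


lemma F1: "j < 5 \<Longrightarrow> q < 5 \<Longrightarrow> q \<noteq> j \<Longrightarrow> y < 4 \<Longrightarrow> y' < 4 \<Longrightarrow> Wv j q y = Wv j q y' \<Longrightarrow> y = y'"
  using F1_0 by blast
lemma F2: "d < 5 \<Longrightarrow> e < 5 \<Longrightarrow> i < 5 \<Longrightarrow> x < 4 \<Longrightarrow> d \<noteq> e \<Longrightarrow> i \<noteq> d \<Longrightarrow> i \<noteq> e \<Longrightarrow>
   even (par (lam d e) (Wv e i x) + par (lam d e) (Wv d i x))"
  using F2_0 by blast
lemma F3: "d < 5 \<Longrightarrow> e < 5 \<Longrightarrow> y < 4 \<Longrightarrow> d \<noteq> e \<Longrightarrow> even (par (lam d e) (Wv e d y))"
  using F3_0 by blast
lemma F4: "d < 5 \<Longrightarrow> e < 5 \<Longrightarrow> d \<noteq> e \<Longrightarrow> odd (par (lam d e) (Cv e) + par (lam d e) (Cv d))"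
  using F4_0 by blast
lemma Wv_lt: "j < 5 \<Longrightarrow> i < 5 \<Longrightarrow> x < 4 \<Longrightarrow> Wv j i x < 8"
  using Wv_lt0 by blast

lemma v8: "v < 8 \<Longrightarrow> v = bt 0 v + 2 * bt 1 v + 4 * bt 2 v"
proof -
  assume v: "v < 8"
  have a: "v = v mod 2 + 2 * (v div 2)" by simp
  have b: "v div 2 = v div 2 mod 2 + 2 * (v div 2 div 2)" by simp
  have c: "v div 2 div 2 = v div 4" by (simp add: div_mult2_eq)
  have d: "v div 4 < 2" using v by (simp add: less_mult_imp_div_less)
  then have e: "v div 4 mod 2 = v div 4" by simp
  have f: "bt 0 v = v mod 2" "bt 1 v = v div 2 mod 2" "bt 2 v = v div 4" unfolding bt_def using e by simp_all
  show ?thesis unfolding f using a b c by linarith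
qed
lemma bt_lt: "bt k v < 2" unfolding bt_def by simp
lemma bt_eq: "even (bt k v) = even (bt k w) \<Longrightarrow> bt k v = bt k w"
  unfolding bt_def using mod2_eq_if[of "v div 2^k"] mod2_eq_if[of "w div 2^k"] by (auto split: if_splits)

definition jS :: "nat \<Rightarrow> nat set \<Rightarrow> nat" where "jS u S = 10 - (\<Sum>p\<in>S. grp u p)"
definition bS :: "nat \<Rightarrow> nat \<Rightarrow> nat set \<Rightarrow> bool" where
  "bS u k S = even (bt k (Cv (jS u S)) + (\<Sum>p\<in>S. bt k (Wv (jS u S) (grp u p) (xx u p))))"
definition des :: "nat \<Rightarrow> nat set \<Rightarrow> bool \<times> bool \<times> bool \<times> nat" where
  "des u S = (bS u 0 S, bS u 1 S, bS u 2 S, (\<Sum>p\<in>S. zz u p) mod u)"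

lemma mod_cancel_lt:
  fixes a b c u :: nat
  assumes "(a + c) mod u = (b + c) mod u" "a < u" "b < u"
  shows "a = b"
proof -
  have key: "x = y" if "(x + c) mod u = (y + c) mod u" "x < u" "y \<le> x" for x y :: nat
  proof (rule ccontr)
    assume "x \<noteq> y"
    then have pos: "0 < x - y" using that(3) by simp
    have "u dvd (x + c) - (y + c)" using mod_eq_dvd_iff_nat[of "y+c" "x+c" u] that by simp
    then have "u dvd x - y" by simp
    moreover have "x - y < u" using that(2) by simp
    ultimately show False using nat_dvd_not_less[OF pos] by blast
  qed
  show ?thesis
  proof (cases "b \<le> a")
    case True then show ?thesis using key assms by blast
  next
    case False then show ?thesis using key[of b a] assms by simp
  qed
qed

lemma des_inj:
  assumes u: "u > 0" and T: "tri u T" and p: "p \<in> cand u T" and p': "p' \<in> cand u T"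
    and eq: "des u (insert p T) = des u (insert p' T)"
  shows "p = p'"
proof -
  obtain m1 m2 where M: "Mset u T = {m1,m2}" "m1 \<noteq> m2" "(\<Sum>t\<in>T. grp u t) + m1 + m2 = 10"
    using tri_sum[OF T] by blast
  have fin: "finite T" using tri_finite[OF T] .
  have pT: "p \<notin> T" "p' \<notin> T" using p p' unfolding cand_def by auto
  define q where "q = grp u p"
  define q' where "q' = grp u p'"
  define y where "y = xx u p"
  define y' where "y' = xx u p'"
  have qM: "q \<in> {m1,m2}" "q' \<in> {m1,m2}" using p p' M(1) unfolding cand_iff q_def q'_def by auto
  have m5: "m1 < 5" "m2 < 5" using M(1) unfolding Mset_def by auto
  have q5: "q < 5" "q' < 5" using qM m5 by auto
  have y4: "y < 4" "y' < 4" unfolding y_def y'_def xx_def by auto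
  have j: "jS u (insert p T) = m1 + m2 - q" "jS u (insert p' T) = m1 + m2 - q'"
    unfolding jS_def q_def q'_def using fin pT M(3) by simp_all
  have bits: "bS u k (insert p T) = bS u k (insert p' T)" if "k \<in> {0,1,2}" for k
    using eq that unfolding des_def by auto
  have zs: "(zz u p + (\<Sum>t\<in>T. zz u t)) mod u = (zz u p' + (\<Sum>t\<in>T. zz u t)) mod u"
    using eq fin pT unfolding des_def by simp
  have bSi: "bS u k (insert r T) = even (bt k (Cv (jS u (insert r T))) + (bt k (Wv (jS u (insert r T)) (grp u r) (xx u r))
      + (\<Sum>t\<in>T. bt k (Wv (jS u (insert r T)) (grp u t) (xx u t)))))" if "r \<notin> T" for r k
    unfolding bS_def using fin that by simp
  show ?thesis
  proof (cases "q = q'")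
    case True
    define J where "J = m1 + m2 - q"
    have jj: "jS u (insert p T) = J" "jS u (insert p' T) = J" using j True J_def by auto
    have J5: "J < 5" "J \<noteq> q" using qM m5 M(2) J_def by auto
    have "even (bt k (Wv J q y)) = even (bt k (Wv J q y'))" if "k \<in> {0,1,2}" for k
      using bits[OF that] bSi[OF pT(1), of k] bSi[OF pT(2), of k] jj True
      unfolding q_def q'_def y_def y'_def by (simp, blast)
    then have "bt k (Wv J q y) = bt k (Wv J q y')" if "k \<in> {0,1,2}" for k
      using bt_eq that by blast
    then have "Wv J q y = Wv J q y'"
      using v8[OF Wv_lt[OF J5(1) q5(1) y4(1)]] v8[OF Wv_lt[OF J5(1) q5(1) y4(2)]] by simp
    then have yy: "y = y'" using F1[OF J5(1) q5(1) _ y4] J5(2) by auto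
    have "zz u p < u" "zz u p' < u" unfolding zz_def using u
      by (simp_all add: less_mult_imp_div_less mult.commute)
    then have zeq: "zz u p = zz u p'" using mod_cancel_lt zs by blast
    have rep: "r = grp u r * (4*u) + (4 * zz u r + xx u r)" for r
      unfolding grp_def zz_def xx_def by (simp add: div_mult_mod_eq)
    show ?thesis using rep[of p] rep[of p'] zeq yy True unfolding q_def q'_def y_def y'_def by simp
  next
    case False
    have jq: "jS u (insert p T) = q'" "jS u (insert p' T) = q" using j qM False M(2) by auto
    define l where "l = lam q q'"
    define A where "A k = bt k (Cv q') + (bt k (Wv q' q y) + (\<Sum>t\<in>T. bt k (Wv q' (grp u t) (xx u t))))" for k
    define B where "B k = bt k (Cv q) + (bt k (Wv q q' y') + (\<Sum>t\<in>T. bt k (Wv q (grp u t) (xx u t))))" for k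
    have AB: "even (A k) = even (B k)" if "k \<in> {0,1,2}" for k
      using bits[OF that] bSi[OF pT(1), of k] bSi[OF pT(2), of k] jq
      unfolding A_def B_def q_def q'_def y_def y'_def by simp
    define PA where "PA = par l (Cv q') + (par l (Wv q' q y) + (\<Sum>t\<in>T. par l (Wv q' (grp u t) (xx u t))))"
    define PB where "PB = par l (Cv q) + (par l (Wv q q' y') + (\<Sum>t\<in>T. par l (Wv q (grp u t) (xx u t))))"
    have PA: "PA = bt 0 l * A 0 + bt 1 l * A 1 + bt 2 l * A 2"
      unfolding PA_def A_def par_def by (simp add: sum.distrib sum_distrib_left algebra_simps)
    have PB: "PB = bt 0 l * B 0 + bt 1 l * B 1 + bt 2 l * B 2"
      unfolding PB_def B_def par_def by (simp add: sum.distrib sum_distrib_left algebra_simps)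
    have "even PA = even PB" unfolding PA PB using AB by simp
    then have ev: "even (PA + PB)" by simp
    have sumT: "PA + PB = (par l (Cv q') + par l (Cv q)) + par l (Wv q' q y) + par l (Wv q q' y')
       + (\<Sum>t\<in>T. par l (Wv q' (grp u t) (xx u t)) + par l (Wv q (grp u t) (xx u t)))"
      unfolding PA_def PB_def by (simp add: sum.distrib algebra_simps)
    have o1: "odd (par l (Cv q') + par l (Cv q))" unfolding l_def using F4[OF q5 False] .
    have e2: "even (par l (Wv q' q y))" unfolding l_def using F3[OF q5 y4(1) False] .
    have e3: "even (par l (Wv q q' y'))" unfolding l_def
      using F3[OF q5(2) q5(1) y4(2)] False lam_sym[OF q5] by auto
    have e4: "even (\<Sum>t\<in>T. par l (Wv q' (grp u t) (xx u t)) + par l (Wv q (grp u t) (xx u t)))"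
    proof (rule dvd_sum)
      fix t assume t: "t \<in> T"
      have ti: "grp u t \<in> grp u ` T" using t by blast
      have gt: "grp u t < 5" "grp u t \<noteq> q" "grp u t \<noteq> q'"
        using tri_img[OF T] ti p p' unfolding cand_def q_def q'_def by auto
      show "even (par l (Wv q' (grp u t) (xx u t)) + par l (Wv q (grp u t) (xx u t)))"
        unfolding l_def using F2[OF q5 gt(1) _ False gt(2) gt(3)] unfolding xx_def by simp
    qed
    have "odd (PA + PB)" unfolding sumT using o1 e2 e3 e4 by simp
    then show ?thesis using ev by simp
  qed
qed


definition DS :: "nat \<Rightarrow> (bool \<times> bool \<times> bool \<times> nat) set" where
  "DS u = (UNIV::bool set) \<times> (UNIV::bool set) \<times> (UNIV::bool set) \<times> {..<u}"
definition Bd :: "nat \<Rightarrow> bool \<times> bool \<times> bool \<times> nat \<Rightarrow> nat set set" where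
  "Bd u d = {S \<in> transverse_subsets 4 (QQ u) (GG u). des u S = d}"

lemma card_DS: "card (DS u) = 8*u"
  unfolding DS_def by (simp add: card_cartesian_product card_UNIV_bool)

lemma finite_DS: "finite (DS u)"
  unfolding DS_def by simp

lemma des_in: "u > 0 \<Longrightarrow> des u S \<in> DS u"
  unfolding des_def DS_def by simp

lemma TS3_tri: "T \<in> transverse_subsets 3 (QQ u) (GG u) \<longleftrightarrow> tri u T"
  unfolding transverse_subsets_def tri_def using trans_iff by auto

lemma surj_des:
  assumes u: "u > 0" and T: "tri u T" and d: "d \<in> DS u"
  shows "\<exists>p\<in>cand u T. des u (insert p T) = d"
proof -
  let ?f = "\<lambda>p. des u (insert p T)"
  have inj: "inj_on ?f (cand u T)" using des_inj[OF u T] by (auto intro: inj_onI)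
  have sub: "?f ` cand u T \<subseteq> DS u" using des_in[OF u] by auto
  have "card (?f ` cand u T) = card (DS u)"
    using card_image[OF inj] card_cand[OF u T] card_DS by simp
  then have "?f ` cand u T = DS u" using card_subset_eq[OF finite_DS sub] by simp
  then have "d \<in> ?f ` cand u T" using d by simp
  then show ?thesis by (metis (no_types, lifting) imageE)
qed

lemma ins_TS:
  assumes u: "u > 0" and T: "tri u T" and p: "p \<in> cand u T"
  shows "insert p T \<in> transverse_subsets 4 (QQ u) (GG u)"
proof -
  have pT: "p \<notin> T" using p unfolding cand_def by auto
  have sub: "insert p T \<subseteq> QQ u" using p T unfolding cand_def tri_def QQ_def by auto
  have card: "card (insert p T) = 4" using pT T tri_finite[OF T] unfolding tri_def by simp
  have "inj_on (grp u) (insert p T)" using p T unfolding cand_def tri_def by auto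
  then show ?thesis unfolding transverse_subsets_def using sub card trans_iff[OF sub] by auto
qed

lemma TS4_ins:
  assumes T: "tri u T" and S: "S \<in> transverse_subsets 4 (QQ u) (GG u)" and TS: "T \<subseteq> S"
  shows "\<exists>p\<in>cand u T. S = insert p T"
proof -
  have sub: "S \<subseteq> QQ u" and cS: "card S = 4" and tr: "transverse (GG u) S"
    using S unfolding transverse_subsets_def by auto
  have finS: "finite S" using sub finite_subset unfolding QQ_def by blast
  have inj: "inj_on (grp u) S" using tr trans_iff[OF sub] by simp
  have cT: "card T = 3" using T unfolding tri_def by simp
  have "S - T \<noteq> {}"
  proof
    assume "S - T = {}"
    then have "S = T" using TS by auto
    then show False using cS cT by simp
  qed
  then obtain p where pS: "p \<in> S" and pT: "p \<notin> T" by auto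
  have "insert p T \<subseteq> S" using pS TS by auto
  moreover have "card (insert p T) = card S" using pT cT cS tri_finite[OF T] by simp
  ultimately have eq: "insert p T = S" using card_subset_eq[OF finS] by blast
  have "p < 5*(4*u)" using pS sub unfolding QQ_def by auto
  moreover have "grp u p \<notin> grp u ` T"
  proof
    assume "grp u p \<in> grp u ` T"
    then obtain t where t: "t \<in> T" "grp u t = grp u p" by auto
    then have "t = p" using inj TS pS by (auto dest: inj_onD)
    then show False using t pT by simp
  qed
  ultimately show ?thesis using eq unfolding cand_def by auto
qed

lemma Hd:
  assumes u: "u > 0" and d: "d \<in> DS u"
  shows "H_design 5 (4*u) 4 3 (QQ u) (GG u) (Bd u d)"
  unfolding H_design_def
proof (intro conjI ballI)
  show "group_partition 5 (4*u) (QQ u) (GG u)" using gp[OF u] .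
  show "Bd u d \<subseteq> transverse_subsets 4 (QQ u) (GG u)" unfolding Bd_def by auto
  fix T assume "T \<in> transverse_subsets 3 (QQ u) (GG u)"
  then have T: "tri u T" using TS3_tri by simp
  obtain p where p: "p \<in> cand u T" "des u (insert p T) = d" using surj_des[OF u T d] by blast
  show "\<exists>!b. b \<in> Bd u d \<and> T \<subseteq> b"
  proof (rule ex1I[of _ "insert p T"])
    show "insert p T \<in> Bd u d \<and> T \<subseteq> insert p T" using ins_TS[OF u T p(1)] p(2) unfolding Bd_def by auto
  next
    fix b assume b: "b \<in> Bd u d \<and> T \<subseteq> b"
    then obtain p' where p': "p' \<in> cand u T" "b = insert p' T"
      using TS4_ins[OF T] unfolding Bd_def by blast
    have "des u (insert p' T) = d" using b p' unfolding Bd_def by auto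
    then have "p' = p" using des_inj[OF u T p'(1) p(1)] p(2) by simp
    then show "b = insert p T" using p' by simp
  qed
qed

lemma T0_tri: "u > 0 \<Longrightarrow> tri u {0, 4*u, 8*u}"
proof -
  assume u: "u > 0"
  have g: "grp u 0 = 0" "grp u (4*u) = 1" "grp u (8*u) = 2" unfolding grp_def using u by auto
  have "8*u = 2*(4*u)" by simp
  then have g3: "grp u (8*u) = 2" unfolding grp_def using u by (metis nonzero_mult_div_cancel_right mult_is_0 zero_neq_numeral neq0_conv) 
  show ?thesis unfolding tri_def QQ_def using u g by auto
qed

theorem lemma11:
  fixes u :: nat
  assumes "u > 0"
  shows "\<exists>(Q :: nat set) G L. large_set_H 5 (4 * u) 4 3 Q G L"
proof (intro exI)
  have u: "u > 0" by fact
  have U: "\<Union>(Bd u ` DS u) = transverse_subsets 4 (QQ u) (GG u)"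
  proof
    show "\<Union>(Bd u ` DS u) \<subseteq> transverse_subsets 4 (QQ u) (GG u)" unfolding Bd_def by auto
    show "transverse_subsets 4 (QQ u) (GG u) \<subseteq> \<Union>(Bd u ` DS u)"
    proof
      fix S assume "S \<in> transverse_subsets 4 (QQ u) (GG u)"
      then have "S \<in> Bd u (des u S)" unfolding Bd_def by simp
      then show "S \<in> \<Union>(Bd u ` DS u)" using des_in[OF u] by blast
    qed
  qed
  have D: "disjoint (Bd u ` DS u)"
    unfolding disjoint_def pairwise_def disjnt_def Bd_def by fastforce
  have E: "{} \<notin> Bd u ` DS u"
  proof
    assume "{} \<in> Bd u ` DS u"
    then obtain d where d: "d \<in> DS u" "Bd u d = {}" by auto
    obtain p where p: "p \<in> cand u {0, 4*u, 8*u}" "des u (insert p {0, 4*u, 8*u}) = d"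
      using surj_des[OF u T0_tri[OF u] d(1)] by blast
    have "insert p {0, 4*u, 8*u} \<in> Bd u d"
      using ins_TS[OF u T0_tri[OF u] p(1)] p(2) unfolding Bd_def by simp
    then show False using d(2) by simp
  qed
  show "large_set_H 5 (4 * u) 4 3 (QQ u) (GG u) (Bd u ` DS u)"
    unfolding large_set_H_def partition_on_def
    using gp[OF u] U D E Hd[OF u] by auto
qed

end
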